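(* Let $R$ be a reduced commutative ring, $a\in R$, and $d\ge -1$ an integer. Then $\mathrm{dimv}\,R\le d$ if and only if $\mathrm{dimv}\,R_{\{a\}}\le d$.
   Context: All rings are commutative with $1$. For a reduced ring $A$ and $a\in A$, write $a^\perp=\mathrm{Ann}_A(a)$ and $(a^\perp)^\perp=\mathrm{Ann}_A(\mathrm{Ann}_A(a))$, and set $A_{\{a\}}:=A/a^\perp\times A/(a^\perp)^\perp$ (the canonical map $A\to A_{\{a\}}$ is injective and $A_{\{a\}}$ is reduced). $\mathrm{dimv}$: a graded rational monomial order on $\mathbb Z^{k}$ is given by a matrix $M\in\mathrm{Mat}_k(\mathbb N)$ which is invertible in $\mathrm{Mat}_k(\mathbb Q)$ and whose first row has all entries $>0$, by setting $e<_M f \iff Me<_{\mathrm{lex}}Mf$ (lexicographic order). For a nonzero polynomial $P\in A[X_0,\dots,X_n]$ its trailing coefficient (for $<_M$) is the coefficient of the $<_M$-smallest monomial occurring in $P$. For $n\ge 0$, $\mathrm{dimv}\,A\le n$ means: for a graded rational monomial order $<_M$ on $\mathbb Z^{n+1}$ and for all $x_0,\dots,x_n\in A$ there is $P\in A[X_0,\dots,X_n]$ with $P(x_0,\dots,x_n)=0$ whose trailing coefficient for $<_M$ equals $1$ (this condition does not depend on the choice of $M$). $\mathrm{dimv}\,A\le -1$ means that $A$ is trivial. *)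

theory Defs
  imports "HOL-Algebra.Algebra"
begin

definition reduced_ring :: "('a, 'b) ring_scheme \<Rightarrow> bool" where
  "reduced_ring R \<longleftrightarrow> cring R \<and>
     (\<forall>x \<in> carrier R. \<forall>n::nat. x [^]\<^bsub>R\<^esub> n = \<zero>\<^bsub>R\<^esub> \<longrightarrow> x = \<zero>\<^bsub>R\<^esub>)"

definition ann_elem :: "('a, 'b) ring_scheme \<Rightarrow> 'a \<Rightarrow> 'a set" where
  "ann_elem R a = {y \<in> carrier R. a \<otimes>\<^bsub>R\<^esub> y = \<zero>\<^bsub>R\<^esub>}"

definition ann_set :: "('a, 'b) ring_scheme \<Rightarrow> 'a set \<Rightarrow> 'a set" where
  "ann_set R S = {y \<in> carrier R. \<forall>z \<in> S. z \<otimes>\<^bsub>R\<^esub> y = \<zero>\<^bsub>R\<^esub>}"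

definition split_ring :: "('a, 'b) ring_scheme \<Rightarrow> 'a \<Rightarrow> ('a set \<times> 'a set) ring" where
  "split_ring R a = RDirProd (R Quot (ann_elem R a)) (R Quot (ann_set R (ann_elem R a)))"

text \<open>A matrix in Mat_k(N) is a function M :: nat => nat => nat, only entries i,j < k matter.
  It must be invertible in Mat_k(Q) and have a strictly positive first row.\<close>
definition graded_rational_matrix :: "nat \<Rightarrow> (nat \<Rightarrow> nat \<Rightarrow> nat) \<Rightarrow> bool" where
  "graded_rational_matrix k M \<longleftrightarrow>
     (\<forall>j < k. M 0 j > 0) \<and>
     (\<exists>N :: nat \<Rightarrow> nat \<Rightarrow> rat.
        (\<forall>i < k. \<forall>j < k. (\<Sum>l<k. N i l * of_nat (M l j)) = (if i = j then 1 else 0)) \<and>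
        (\<forall>i < k. \<forall>j < k. (\<Sum>l<k. of_nat (M i l) * N l j) = (if i = j then 1 else 0)))"

definition mat_vec :: "nat \<Rightarrow> (nat \<Rightarrow> nat \<Rightarrow> nat) \<Rightarrow> (nat \<Rightarrow> nat) \<Rightarrow> nat \<Rightarrow> nat" where
  "mat_vec k M e i = (\<Sum>j<k. M i j * e j)"

definition lex_less :: "nat \<Rightarrow> (nat \<Rightarrow> nat) \<Rightarrow> (nat \<Rightarrow> nat) \<Rightarrow> bool" where
  "lex_less k u v \<longleftrightarrow> (\<exists>i < k. (\<forall>j < i. u j = v j) \<and> u i < v i)"

definition monorder_less :: "nat \<Rightarrow> (nat \<Rightarrow> nat \<Rightarrow> nat) \<Rightarrow> (nat \<Rightarrow> nat) \<Rightarrow> (nat \<Rightarrow> nat) \<Rightarrow> bool" where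
  "monorder_less k M e f \<longleftrightarrow> lex_less k (mat_vec k M e) (mat_vec k M f)"

text \<open>A polynomial in R[X_0,...,X_n] is a finitely supported coefficient function on
  exponent vectors e :: nat => nat with e j = 0 for j > n.\<close>
definition exps :: "nat \<Rightarrow> (nat \<Rightarrow> nat) set" where
  "exps n = {e. \<forall>j > n. e j = 0}"

definition mpoly :: "('a, 'b) ring_scheme \<Rightarrow> nat \<Rightarrow> ((nat \<Rightarrow> nat) \<Rightarrow> 'a) \<Rightarrow> bool" where
  "mpoly R n P \<longleftrightarrow> finite {e. P e \<noteq> \<zero>\<^bsub>R\<^esub>} \<and>
     (\<forall>e. P e \<noteq> \<zero>\<^bsub>R\<^esub> \<longrightarrow> e \<in> exps n) \<and> (\<forall>e. P e \<in> carrier R)"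

definition mpoly_eval :: "('a, 'b) ring_scheme \<Rightarrow> nat \<Rightarrow> ((nat \<Rightarrow> nat) \<Rightarrow> 'a) \<Rightarrow> (nat \<Rightarrow> 'a) \<Rightarrow> 'a" where
  "mpoly_eval R n P x =
     (\<Oplus>\<^bsub>R\<^esub> e \<in> {e. P e \<noteq> \<zero>\<^bsub>R\<^esub>}. P e \<otimes>\<^bsub>R\<^esub> (\<Otimes>\<^bsub>R\<^esub> j \<in> {..n}. x j [^]\<^bsub>R\<^esub> e j))"

text \<open>The trailing coefficient (coefficient of the <_M-smallest monomial occurring in P) equals 1.
  For a nontrivial ring this forces P to be nonzero; for the trivial ring it holds for P = 0,
  in accordance with dimv(trivial ring) <= -1 <= n.\<close>
definition trailing_coeff_one :: "('a, 'b) ring_scheme \<Rightarrow> nat \<Rightarrow> (nat \<Rightarrow> nat \<Rightarrow> nat) \<Rightarrow> ((nat \<Rightarrow> nat) \<Rightarrow> 'a) \<Rightarrow> bool" where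
  "trailing_coeff_one R n M P \<longleftrightarrow>
     (\<exists>e \<in> exps n. P e = \<one>\<^bsub>R\<^esub> \<and>
        (\<forall>f. f \<noteq> e \<and> P f \<noteq> \<zero>\<^bsub>R\<^esub> \<longrightarrow> monorder_less (Suc n) M e f))"

definition dimv_le :: "('a, 'b) ring_scheme \<Rightarrow> int \<Rightarrow> bool" where
  "dimv_le R d \<longleftrightarrow>
     (if d = -1 then carrier R = {\<zero>\<^bsub>R\<^esub>}
      else (\<forall>M. graded_rational_matrix (Suc (nat d)) M \<longrightarrow>
             (\<forall>x. (\<forall>j \<le> nat d. x j \<in> carrier R) \<longrightarrow>
                (\<exists>P. mpoly R (nat d) P \<and> mpoly_eval R (nat d) P x = \<zero>\<^bsub>R\<^esub> \<and>
                     trailing_coeff_one R (nat d) M P))))"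

end

theory Submission
  imports Defs
begin

lemma RDP_simps[simp]:
  "carrier (RDirProd A B) = carrier A \<times> carrier B"
  "\<zero>\<^bsub>RDirProd A B\<^esub> = (\<zero>\<^bsub>A\<^esub>, \<zero>\<^bsub>B\<^esub>)"
  "\<one>\<^bsub>RDirProd A B\<^esub> = (\<one>\<^bsub>A\<^esub>, \<one>\<^bsub>B\<^esub>)"
  "p \<otimes>\<^bsub>RDirProd A B\<^esub> q = (fst p \<otimes>\<^bsub>A\<^esub> fst q, snd p \<otimes>\<^bsub>B\<^esub> snd q)"
  "p \<oplus>\<^bsub>RDirProd A B\<^esub> q = (fst p \<oplus>\<^bsub>A\<^esub> fst q, snd p \<oplus>\<^bsub>B\<^esub> snd q)"
  by (auto simp: RDirProd_def DirProd_def monoid.defs case_prod_beta)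

lemma RDP_fst_hom: "fst \<in> ring_hom (RDirProd A B) A"
  by (auto intro!: ring_hom_memI)

lemma RDP_snd_hom: "snd \<in> ring_hom (RDirProd A B) B"
  by (auto intro!: ring_hom_memI)

lemma RDP_cring:
  assumes "cring A" "cring B" shows "cring (RDirProd A B)"
proof -
  interpret A: cring A by fact
  interpret B: cring B by fact
  have r: "ring (RDirProd A B)" by (rule RDirProd_ring) (simp_all add: A.ring_axioms B.ring_axioms)
  show ?thesis
    apply (intro cring.intro r comm_monoid.intro ring.is_monoid comm_monoid_axioms.intro)
     apply (auto simp: A.m_comm B.m_comm)
    done
qed


definition addf :: "(nat \<Rightarrow> nat) \<Rightarrow> (nat \<Rightarrow> nat) \<Rightarrow> nat \<Rightarrow> nat" where
  "addf f g = (\<lambda>j. f j + g j)"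

lemma lex_less_irrefl: "\<not> lex_less k u u"
  by (auto simp: lex_less_def)

lemma lex_less_add:
  assumes "lex_less k u v" "lex_less k u' v' \<or> u' = v'"
  shows "lex_less k (\<lambda>i. u i + u' i) (\<lambda>i. v i + v' i)"
  using assms(2)
proof
  assume "u' = v'"
  then show ?thesis using assms(1) by (auto simp: lex_less_def)
next
  assume b: "lex_less k u' v'"
  obtain i where i: "i < k" "\<forall>j<i. u j = v j" "u i < v i" using assms(1) by (auto simp: lex_less_def)
  obtain i' where i': "i' < k" "\<forall>j<i'. u' j = v' j" "u' i' < v' i'" using b by (auto simp: lex_less_def)
  show ?thesis unfolding lex_less_def
  proof (cases "i \<le> i'")
    case True
    then show "\<exists>m<k. (\<forall>j<m. u j + u' j = v j + v' j) \<and> u m + u' m < v m + v' m"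
      using i i' by (intro exI[of _ i]) (auto simp: le_less)
  next
    case False
    then show "\<exists>m<k. (\<forall>j<m. u j + u' j = v j + v' j) \<and> u m + u' m < v m + v' m"
      using i i' by (intro exI[of _ i']) auto
  qed
qed

lemma mat_vec_addf: "mat_vec k M (addf f g) = (\<lambda>i. mat_vec k M f i + mat_vec k M g i)"
  by (auto simp: mat_vec_def addf_def algebra_simps sum.distrib)

lemma monorder_irrefl: "\<not> monorder_less k M e e"
  by (simp add: monorder_less_def lex_less_irrefl)

lemma monorder_add:
  assumes "monorder_less k M e f \<or> e = f" "monorder_less k M e' f' \<or> e' = f'"
    "\<not> (e = f \<and> e' = f')"
  shows "monorder_less k M (addf e e') (addf f f')"
proof -
  have "lex_less k (mat_vec k M e) (mat_vec k M f) \<and> (lex_less k (mat_vec k M e') (mat_vec k M f') \<or> mat_vec k M e' = mat_vec k M f')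
     \<or> lex_less k (mat_vec k M e') (mat_vec k M f') \<and> (lex_less k (mat_vec k M e) (mat_vec k M f) \<or> mat_vec k M e = mat_vec k M f)"
    using assms unfolding monorder_less_def by auto
  then show ?thesis
    unfolding monorder_less_def mat_vec_addf
    using lex_less_add[of k "mat_vec k M e" "mat_vec k M f" "mat_vec k M e'" "mat_vec k M f'"]
      lex_less_add[of k "mat_vec k M e'" "mat_vec k M f'" "mat_vec k M e" "mat_vec k M f"]
    by (auto simp: add.commute)
qed

lemma addf_exps: "f \<in> exps n \<Longrightarrow> g \<in> exps n \<Longrightarrow> addf f g \<in> exps n"
  by (auto simp: exps_def addf_def)


definition mono :: "('a, 'b) ring_scheme \<Rightarrow> nat \<Rightarrow> (nat \<Rightarrow> 'a) \<Rightarrow> (nat \<Rightarrow> nat) \<Rightarrow> 'a" where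
  "mono R n x e = (\<Otimes>\<^bsub>R\<^esub> j \<in> {..n}. x j [^]\<^bsub>R\<^esub> e j)"

context cring
begin

lemma mono_closed: "(\<And>j. j \<le> n \<Longrightarrow> x j \<in> carrier R) \<Longrightarrow> mono R n x e \<in> carrier R"
  unfolding mono_def by (auto intro!: finprod_closed)

lemma mono_addf:
  assumes "\<And>j. j \<le> n \<Longrightarrow> x j \<in> carrier R"
  shows "mono R n x (addf f g) = mono R n x f \<otimes> mono R n x g"
proof -
  have "mono R n x (addf f g) = (\<Otimes>j \<in> {..n}. x j [^] f j \<otimes> x j [^] g j)"
    unfolding mono_def addf_def
    by (rule finprod_cong') (auto simp: assms nat_pow_mult)
  also have "\<dots> = mono R n x f \<otimes> mono R n x g"
    unfolding mono_def by (rule finprod_multf) (auto simp: assms)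
  finally show ?thesis .
qed

lemma eval_superset:
  assumes "finite S" "{e. P e \<noteq> \<zero>} \<subseteq> S" "\<And>e. P e \<in> carrier R"
    "\<And>j. j \<le> n \<Longrightarrow> x j \<in> carrier R"
  shows "mpoly_eval R n P x = (\<Oplus>e \<in> S. P e \<otimes> mono R n x e)"
  unfolding mpoly_eval_def mono_def[symmetric]
  by (rule add.finprod_mono_neutral_cong_left)
     (use assms in \<open>auto intro!: mono_closed simp: mono_closed\<close>)

lemma eval_cong:
  assumes "\<And>j. j \<le> n \<Longrightarrow> x j = y j" "\<And>j. j \<le> n \<Longrightarrow> y j \<in> carrier R"
  shows "mpoly_eval R n P x = mpoly_eval R n P y"
proof -
  have "\<And>e. mono R n x e = mono R n y e"
    unfolding mono_def by (rule finprod_cong') (auto simp: assms)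
  then show ?thesis unfolding mpoly_eval_def mono_def[symmetric] by simp
qed

end

context ring_hom_cring
begin

lemma mono_hom:
  assumes "\<And>j. j \<le> n \<Longrightarrow> x j \<in> carrier R"
  shows "h (mono R n x e) = mono S n (h \<circ> x) e"
  unfolding mono_def using assms
  by (subst hom_finprod) (auto intro!: S.finprod_cong' hom_nat_pow)

lemma mpoly_hom:
  assumes "mpoly R n P"
  shows "mpoly S n (h \<circ> P)"
proof -
  have sub: "{e. h (P e) \<noteq> \<zero>\<^bsub>S\<^esub>} \<subseteq> {e. P e \<noteq> \<zero>}" by auto
  have "\<And>e. h (P e) \<noteq> \<zero>\<^bsub>S\<^esub> \<Longrightarrow> P e \<noteq> \<zero>" by auto
  then show ?thesis using assms unfolding mpoly_def
    by (auto intro: finite_subset[OF sub])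
qed

lemma eval_hom:
  assumes "mpoly R n P" "\<And>j. j \<le> n \<Longrightarrow> x j \<in> carrier R"
  shows "h (mpoly_eval R n P x) = mpoly_eval S n (h \<circ> P) (h \<circ> x)"
proof -
  have fin: "finite {e. P e \<noteq> \<zero>}" and car: "\<And>e. P e \<in> carrier R"
    using assms(1) unfolding mpoly_def by auto
  have "h (mpoly_eval R n P x) = h (\<Oplus>e \<in> {e. P e \<noteq> \<zero>}. P e \<otimes> mono R n x e)"
    unfolding mpoly_eval_def mono_def ..
  also have "\<dots> = (\<Oplus>\<^bsub>S\<^esub> e \<in> {e. P e \<noteq> \<zero>}. h (P e) \<otimes>\<^bsub>S\<^esub> mono S n (h \<circ> x) e)"
    using car assms(2) R.mono_closed[of n x] S.mono_closed[of n "h \<circ> x"] mono_hom[of n x]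
    by (subst hom_finsum) (auto intro!: S.finsum_cong' simp: hom_mult)
  also have "\<dots> = mpoly_eval S n (h \<circ> P) (h \<circ> x)"
  proof -
    have "mpoly_eval S n (h \<circ> P) (h \<circ> x) = (\<Oplus>\<^bsub>S\<^esub> e \<in> {e. P e \<noteq> \<zero>}. (h \<circ> P) e \<otimes>\<^bsub>S\<^esub> mono S n (h \<circ> x) e)"
      by (rule S.eval_superset) (use fin car assms(2) in auto)
    then show ?thesis by simp
  qed
  finally show ?thesis .
qed

end


definition pmul :: "('a, 'b) ring_scheme \<Rightarrow> ((nat \<Rightarrow> nat) \<Rightarrow> 'a) \<Rightarrow> ((nat \<Rightarrow> nat) \<Rightarrow> 'a) \<Rightarrow> (nat \<Rightarrow> nat) \<Rightarrow> 'a" where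
  "pmul R P Q h = (\<Oplus>\<^bsub>R\<^esub> p \<in> {p \<in> {e. P e \<noteq> \<zero>\<^bsub>R\<^esub>} \<times> {e. Q e \<noteq> \<zero>\<^bsub>R\<^esub>}. addf (fst p) (snd p) = h}.
      P (fst p) \<otimes>\<^bsub>R\<^esub> Q (snd p))"

context cring
begin

lemma finsum_Sigma:
  assumes "finite A" "finite B" "\<And>a b. a \<in> A \<Longrightarrow> b \<in> B \<Longrightarrow> t (a, b) \<in> carrier R"
  shows "(\<Oplus>p \<in> A \<times> B. t p) = (\<Oplus>a \<in> A. \<Oplus>b \<in> B. t (a, b))"
proof -
  have "A \<times> B = (\<Union>a \<in> A. {a} \<times> B)" by auto
  then have "(\<Oplus>p \<in> A \<times> B. t p) = (\<Oplus>a \<in> A. \<Oplus>p \<in> {a} \<times> B. t p)"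
    using assms by (simp only:) (rule add.finprod_UN_disjoint, auto simp: pairwise_def disjnt_def)
  also have "\<dots> = (\<Oplus>a \<in> A. \<Oplus>b \<in> B. t (a, b))"
  proof (rule finsum_cong')
    fix a assume a: "a \<in> A"
    have "{a} \<times> B = Pair a ` B" by auto
    then show "(\<Oplus>p \<in> {a} \<times> B. t p) = (\<Oplus>b \<in> B. t (a, b))"
      using a assms by (simp only:) (rule finsum_reindex, auto simp: inj_on_def)
  qed (use assms in \<open>auto intro!: finsum_closed\<close>)
  finally show ?thesis .
qed

lemma pmul_closed': "(\<And>e. P e \<in> carrier R) \<Longrightarrow> (\<And>e. Q e \<in> carrier R) \<Longrightarrow> pmul R P Q h \<in> carrier R"
  unfolding pmul_def by (auto intro!: finsum_closed)

lemma pmul_outside: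
  assumes "h \<notin> (\<lambda>p. addf (fst p) (snd p)) ` ({e. P e \<noteq> \<zero>} \<times> {e. Q e \<noteq> \<zero>})"
  shows "pmul R P Q h = \<zero>"
proof -
  have "{p \<in> {e. P e \<noteq> \<zero>} \<times> {e. Q e \<noteq> \<zero>}. addf (fst p) (snd p) = h} = {}"
    using assms by force
  then show ?thesis unfolding pmul_def by (simp only: finsum_empty)
qed

lemma mpoly_pmul:
  assumes "mpoly R n P" "mpoly R n Q"
  shows "mpoly R n (pmul R P Q)"
proof -
  let ?H = "(\<lambda>p. addf (fst p) (snd p)) ` ({e. P e \<noteq> \<zero>} \<times> {e. Q e \<noteq> \<zero>})"
  have fin: "finite ?H" using assms unfolding mpoly_def by auto
  have sub: "{e. pmul R P Q e \<noteq> \<zero>} \<subseteq> ?H" using pmul_outside by blast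
  have ex: "e \<in> exps n" if "pmul R P Q e \<noteq> \<zero>" for e
  proof -
    from that sub obtain f g where "P f \<noteq> \<zero>" "Q g \<noteq> \<zero>" "e = addf f g" by auto
    then show ?thesis using assms addf_exps unfolding mpoly_def by metis
  qed
  show ?thesis unfolding mpoly_def
    using finite_subset[OF sub fin] ex pmul_closed'[of P Q] assms unfolding mpoly_def by auto
qed

lemma eval_pmul:
  assumes "mpoly R n P" "mpoly R n Q" "\<And>j. j \<le> n \<Longrightarrow> x j \<in> carrier R"
  shows "mpoly_eval R n (pmul R P Q) x = mpoly_eval R n P x \<otimes> mpoly_eval R n Q x"
proof -
  define SP where "SP = {e. P e \<noteq> \<zero>}"
  define SQ where "SQ = {e. Q e \<noteq> \<zero>}"
  define H where "H = (\<lambda>p. addf (fst p) (snd p)) ` (SP \<times> SQ)"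
  define fib where "fib h = {p \<in> SP \<times> SQ. addf (fst p) (snd p) = h}" for h
  define t where "t p = (P (fst p) \<otimes> mono R n x (fst p)) \<otimes> (Q (snd p) \<otimes> mono R n x (snd p))" for p
  have fSP: "finite SP" and fSQ: "finite SQ" and cP: "\<And>e. P e \<in> carrier R" and cQ: "\<And>e. Q e \<in> carrier R"
    using assms unfolding mpoly_def SP_def SQ_def by auto
  have mc: "\<And>e. mono R n x e \<in> carrier R" using mono_closed assms(3) by blast
  have fH: "finite H" unfolding H_def using fSP fSQ by auto
  have ffib: "finite (fib h)" for h unfolding fib_def using fSP fSQ by auto
  have tc: "t p \<in> carrier R" for p unfolding t_def using cP cQ mc by auto
  have "mpoly_eval R n (pmul R P Q) x = (\<Oplus>h \<in> H. pmul R P Q h \<otimes> mono R n x h)"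
    by (rule eval_superset) (use fH pmul_outside cP cQ pmul_closed'[of P Q] assms(3) in \<open>auto simp: H_def SP_def SQ_def\<close>)
  also have "\<dots> = (\<Oplus>h \<in> H. \<Oplus>p \<in> fib h. t p)"
  proof (rule finsum_cong')
    fix h assume "h \<in> H"
    have pf: "pmul R P Q h = (\<Oplus>p \<in> fib h. P (fst p) \<otimes> Q (snd p))"
      unfolding pmul_def fib_def SP_def SQ_def ..
    have "pmul R P Q h \<otimes> mono R n x h = (\<Oplus>p \<in> fib h. (P (fst p) \<otimes> Q (snd p)) \<otimes> mono R n x h)"
      unfolding pf by (rule finsum_ldistr) (use ffib cP cQ mc in auto)
    also have "\<dots> = (\<Oplus>p \<in> fib h. t p)"
    proof (rule finsum_cong')
      fix p assume "p \<in> fib h"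
      then have "h = addf (fst p) (snd p)" unfolding fib_def by auto
      then show "(P (fst p) \<otimes> Q (snd p)) \<otimes> mono R n x h = t p"
        unfolding t_def using mono_addf[OF assms(3)] cP cQ mc by (simp add: m_ac)
    qed (use tc in auto)
    finally show "pmul R P Q h \<otimes> mono R n x h = (\<Oplus>p \<in> fib h. t p)" .
  qed (use ffib tc in \<open>auto intro!: finsum_closed\<close>)
  also have "\<dots> = (\<Oplus>p \<in> (\<Union>h \<in> H. fib h). t p)"
    by (rule add.finprod_UN_disjoint[symmetric])
       (use fH ffib tc in \<open>auto simp: pairwise_def disjnt_def fib_def\<close>)
  also have "(\<Union>h \<in> H. fib h) = SP \<times> SQ" unfolding H_def fib_def by auto
  also have "(\<Oplus>p \<in> SP \<times> SQ. t p) = (\<Oplus>f \<in> SP. \<Oplus>g \<in> SQ. t (f, g))"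
    by (rule finsum_Sigma) (use fSP fSQ tc in auto)
  also have "\<dots> = (\<Oplus>f \<in> SP. (P f \<otimes> mono R n x f) \<otimes> (\<Oplus>g \<in> SQ. Q g \<otimes> mono R n x g))"
    unfolding t_def fst_conv snd_conv
    by (intro finsum_cong' finsum_rdistr[symmetric]) (use fSQ cP cQ mc in \<open>auto intro!: finsum_closed\<close>)
  also have "\<dots> = (\<Oplus>f \<in> SP. P f \<otimes> mono R n x f) \<otimes> (\<Oplus>g \<in> SQ. Q g \<otimes> mono R n x g)"
    by (rule finsum_ldistr[symmetric]) (use fSP fSQ cP cQ mc in \<open>auto intro!: finsum_closed\<close>)
  also have "\<dots> = mpoly_eval R n P x \<otimes> mpoly_eval R n Q x"
    unfolding mpoly_eval_def mono_def SP_def SQ_def ..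
  finally show ?thesis .
qed

end


context cring
begin

lemma trailing_pmul:
  assumes "mpoly R n P" "mpoly R n Q" "trailing_coeff_one R n M P" "trailing_coeff_one R n M Q"
  shows "trailing_coeff_one R n M (pmul R P Q)"
proof -
  obtain e1 where e1: "e1 \<in> exps n" "P e1 = \<one>" "\<And>f. f \<noteq> e1 \<Longrightarrow> P f \<noteq> \<zero> \<Longrightarrow> monorder_less (Suc n) M e1 f"
    using assms(3) unfolding trailing_coeff_one_def by auto
  obtain e2 where e2: "e2 \<in> exps n" "Q e2 = \<one>" "\<And>f. f \<noteq> e2 \<Longrightarrow> Q f \<noteq> \<zero> \<Longrightarrow> monorder_less (Suc n) M e2 f"
    using assms(4) unfolding trailing_coeff_one_def by auto
  have cP: "\<And>e. P e \<in> carrier R" and cQ: "\<And>e. Q e \<in> carrier R"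
    using assms unfolding mpoly_def by auto
  define e where "e = addf e1 e2"
  have eex: "e \<in> exps n" unfolding e_def using e1 e2 addf_exps by blast
  show ?thesis
  proof (cases "\<one> = \<zero>")
    case True
    have z: "y = \<zero>" if "y \<in> carrier R" for y
      using that True by (metis r_one r_null)
    show ?thesis unfolding trailing_coeff_one_def
      using eex z[OF pmul_closed'[of P Q]] cP cQ True by auto
  next
    case False
    have key: "monorder_less (Suc n) M e (addf f g)"
      if "P f \<noteq> \<zero>" "Q g \<noteq> \<zero>" "(f, g) \<noteq> (e1, e2)" for f g
      unfolding e_def by (rule monorder_add) (use that e1 e2 in auto)
    have fib: "{p \<in> {e. P e \<noteq> \<zero>} \<times> {e. Q e \<noteq> \<zero>}. addf (fst p) (snd p) = e} = {(e1, e2)}"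
    proof (intro equalityI subsetI)
      fix p assume p: "p \<in> {p \<in> {e. P e \<noteq> \<zero>} \<times> {e. Q e \<noteq> \<zero>}. addf (fst p) (snd p) = e}"
      show "p \<in> {(e1, e2)}"
      proof (rule ccontr)
        assume "p \<notin> {(e1, e2)}"
        then have "monorder_less (Suc n) M e (addf (fst p) (snd p))"
          using p by (intro key) (auto simp: prod_eq_iff)
        then show False using p monorder_irrefl by auto
      qed
    qed (use e1 e2 False e_def in auto)
    have pe: "pmul R P Q e = \<one>"
      unfolding pmul_def fib using e1 e2 by simp
    have rest: "monorder_less (Suc n) M e h" if "h \<noteq> e" "pmul R P Q h \<noteq> \<zero>" for h
    proof -
      have "h \<in> (\<lambda>p. addf (fst p) (snd p)) ` ({e. P e \<noteq> \<zero>} \<times> {e. Q e \<noteq> \<zero>})"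
        using that(2) pmul_outside[of h P Q] by blast
      then obtain f g where fg: "P f \<noteq> \<zero>" "Q g \<noteq> \<zero>" "h = addf f g" by auto
      then have "(f, g) \<noteq> (e1, e2)" using that(1) e_def by auto
      then show ?thesis using key fg by auto
    qed
    show ?thesis unfolding trailing_coeff_one_def using eex pe rest by auto
  qed
qed

end


lemma mk_rhc: "cring A \<Longrightarrow> cring B \<Longrightarrow> h \<in> ring_hom A B \<Longrightarrow> ring_hom_cring A B h"
  by (simp add: ring_hom_cring_def ring_hom_cring_axioms_def)

context cring
begin

lemma eval_closed:
  assumes "mpoly R n P" "\<And>j. j \<le> n \<Longrightarrow> x j \<in> carrier R"
  shows "mpoly_eval R n P x \<in> carrier R"
  using assms mono_closed[of n x] unfolding mpoly_eval_def mpoly_def mono_def[symmetric]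
  by (auto intro!: finsum_closed)

lemma poly_product:
  assumes "mpoly R n P" "mpoly R n Q" "trailing_coeff_one R n M P" "trailing_coeff_one R n M Q"
  shows "\<exists>W. mpoly R n W \<and> trailing_coeff_one R n M W \<and>
     (\<forall>x. (\<forall>j \<le> n. x j \<in> carrier R) \<longrightarrow> mpoly_eval R n W x = mpoly_eval R n P x \<otimes> mpoly_eval R n Q x)"
  using mpoly_pmul[OF assms(1,2)] trailing_pmul[OF assms] eval_pmul[OF assms(1,2)] by blast

lemma ann_ideal:
  assumes "S \<subseteq> carrier R"
  shows "ideal (ann_set R S) R"
proof (rule idealI)
  show "ring R" by (rule ring_axioms)
  show "subgroup (ann_set R S) (add_monoid R)"
  proof (rule add.subgroupI)
    show "ann_set R S \<subseteq> carrier R" unfolding ann_set_def by auto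
    have "\<zero> \<in> ann_set R S" unfolding ann_set_def using assms by auto
    then show "ann_set R S \<noteq> {}" by blast
    fix u v assume u: "u \<in> ann_set R S" and v: "v \<in> ann_set R S"
    show "\<ominus> u \<in> ann_set R S" using u assms unfolding ann_set_def by (auto simp: r_minus subset_iff)
    show "u \<oplus> v \<in> ann_set R S" using u v assms unfolding ann_set_def by (auto simp: r_distr subset_iff)
  qed
next
  fix u w assume u: "u \<in> ann_set R S" and w: "w \<in> carrier R"
  show "w \<otimes> u \<in> ann_set R S" using u w assms unfolding ann_set_def
    by (auto simp: subset_iff) (metis m_lcomm r_null)
  show "u \<otimes> w \<in> ann_set R S" using u w assms unfolding ann_set_def
    by (auto simp: subset_iff) (metis m_assoc l_null)
qed

end

context ring_hom_cring
begin

lemma trailing_hom: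
  assumes "trailing_coeff_one R n M W"
  shows "trailing_coeff_one S n M (h \<circ> W)"
proof -
  have "\<And>f. h (W f) \<noteq> \<zero>\<^bsub>S\<^esub> \<Longrightarrow> W f \<noteq> \<zero>" by auto
  then show ?thesis using assms unfolding trailing_coeff_one_def by force
qed

end

context ideal
begin

lemma class_zero: "r \<in> carrier R \<Longrightarrow> I +> r = I \<Longrightarrow> r \<in> I"
  using a_rcos_self by force

lemma class_zero_iff: "r \<in> carrier R \<Longrightarrow> I +> r = I \<longleftrightarrow> r \<in> I"
  using class_zero a_rcos_const by blast

lemma quot_carrier_rep: "Y \<in> carrier (R Quot I) \<Longrightarrow> \<exists>r \<in> carrier R. I +> r = Y"
  unfolding FactRing_def by (auto simp: A_RCOSETS_def')

lemma quot_zero: "\<zero>\<^bsub>R Quot I\<^esub> = I" and quot_one: "\<one>\<^bsub>R Quot I\<^esub> = I +> \<one>"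
  by (simp_all add: FactRing_def)

end


lemma (in cring) lift_poly:
  fixes S :: "('c, 'd) ring_scheme" and \<pi> :: "'c \<Rightarrow> 'a set"
  assumes K: "ideal K R" and cS: "cring S" and pi: "\<pi> \<in> ring_hom S (R Quot K)"
    and T: "mpoly S n T" and tr: "trailing_coeff_one S n M T"
    and x: "\<forall>j\<le>n. x j \<in> carrier R" and y: "\<forall>j\<le>n. y j \<in> carrier S"
    and xy: "\<forall>j\<le>n. \<pi> (y j) = K +> x j"
    and ev: "mpoly_eval S n T y = \<zero>\<^bsub>S\<^esub>"
  shows "\<exists>P. mpoly R n P \<and> trailing_coeff_one R n M P \<and> mpoly_eval R n P x \<in> K"
proof -
  interpret K: ideal K R by fact
  have cQ: "cring (R Quot K)" by (rule K.quotient_is_cring[OF is_cring])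
  interpret hK: ring_hom_cring R "R Quot K" "(+>) K" by (rule K.rcos_ring_hom_cring[OF is_cring])
  interpret hp: ring_hom_cring S "R Quot K" \<pi> by (rule mk_rhc[OF cS cQ pi])
  obtain e where e: "e \<in> exps n" "T e = \<one>\<^bsub>S\<^esub>"
    "\<And>f. f \<noteq> e \<Longrightarrow> T f \<noteq> \<zero>\<^bsub>S\<^esub> \<Longrightarrow> monorder_less (Suc n) M e f"
    using tr unfolding trailing_coeff_one_def by auto
  have Tc: "\<And>f. T f \<in> carrier S" using T unfolding mpoly_def by auto
  have K0: "K +> \<zero> = K" using K.class_zero_iff K.additive_subgroup_axioms additive_subgroup.zero_closed by blast
  define P where "P f = (if f = e then \<one> else if \<pi> (T f) = K then \<zero>
      else (SOME r. r \<in> carrier R \<and> K +> r = \<pi> (T f)))" for f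
  have Pp: "P f \<in> carrier R \<and> K +> P f = \<pi> (T f)" for f
  proof (cases "f = e")
    case True
    have "\<pi> (T f) = \<one>\<^bsub>R Quot K\<^esub>" using True e(2) by simp
    moreover have "P f = \<one>" unfolding P_def using True by simp
    ultimately show ?thesis using K.quot_one one_closed by metis
  next
    case False
    show ?thesis
    proof (cases "\<pi> (T f) = K")
      case True
      then show ?thesis unfolding P_def using False K0 by simp
    next
      case False2: False
      have "\<pi> (T f) \<in> carrier (R Quot K)" using Tc hp.hom_closed by blast
      then have "\<exists>r. r \<in> carrier R \<and> K +> r = \<pi> (T f)" using K.quot_carrier_rep by blast
      from someI_ex[OF this] show ?thesis unfolding P_def using False False2 by simp
    qed
  qed
  have supp: "T f \<noteq> \<zero>\<^bsub>S\<^esub>" if "f \<noteq> e" "P f \<noteq> \<zero>" for f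
  proof
    assume "T f = \<zero>\<^bsub>S\<^esub>"
    then have "\<pi> (T f) = K" by (simp add: K.quot_zero)
    then show False using that unfolding P_def by simp
  qed
  have mP: "mpoly R n P"
  proof -
    have "{f. P f \<noteq> \<zero>} \<subseteq> insert e {f. T f \<noteq> \<zero>\<^bsub>S\<^esub>}" using supp by auto
    then show ?thesis using T e(1) supp Pp unfolding mpoly_def
      by (auto intro: finite_subset)
  qed
  have trP: "trailing_coeff_one R n M P"
    unfolding trailing_coeff_one_def using e supp by (auto simp: P_def)
  have "K +> mpoly_eval R n P x = mpoly_eval (R Quot K) n ((+>) K \<circ> P) ((+>) K \<circ> x)"
    by (rule hK.eval_hom) (use mP x in auto)
  also have "(+>) K \<circ> P = \<pi> \<circ> T" using Pp by auto
  also have "mpoly_eval (R Quot K) n (\<pi> \<circ> T) ((+>) K \<circ> x) = mpoly_eval (R Quot K) n (\<pi> \<circ> T) (\<pi> \<circ> y)"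
    by (rule cring.eval_cong[OF cQ]) (use xy y hp.hom_closed in \<open>auto simp del: hp.hom_closed\<close>, metis hp.hom_closed)
  also have "\<dots> = \<pi> (mpoly_eval S n T y)"
    by (rule hp.eval_hom[symmetric]) (use T y in auto)
  also have "\<dots> = K" using ev by (simp add: K.quot_zero)
  finally have "mpoly_eval R n P x \<in> K"
    using K.class_zero eval_closed[OF mP] x by auto
  then show ?thesis using mP trP by blast
qed


lemma (in cring) main:
  assumes red: "\<forall>x\<in>carrier R. \<forall>n::nat. x [^] n = \<zero> \<longrightarrow> x = \<zero>" and "a \<in> carrier R"
  shows "dimv_le R d \<longleftrightarrow> dimv_le (split_ring R a) d"
proof -
  have cR: "cring R" by (rule is_cring)
  define I where "I = ann_elem R a"
  define J where "J = ann_set R I"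
  have Ieq: "I = ann_set R {a}" unfolding I_def ann_elem_def ann_set_def by auto
  have iI: "ideal I R" unfolding Ieq by (rule ann_ideal) (use assms(2) in auto)
  have iJ: "ideal J R" unfolding J_def by (rule ann_ideal) (auto simp: I_def ann_elem_def)
  interpret I: ideal I R by (rule iI)
  interpret J: ideal J R by (rule iJ)
  have inter: "u = \<zero>" if "u \<in> I" "u \<in> J" for u
  proof -
    have uc: "u \<in> carrier R" using that(1) I.a_subset by blast
    have "u \<otimes> u = \<zero>" using that unfolding J_def ann_set_def by auto
    then have "u [^] (2::nat) = \<zero>" using uc by (simp add: numeral_2_eq_2)
    then show ?thesis using red uc by blast
  qed
  have cQI: "cring (R Quot I)" by (rule I.quotient_is_cring[OF cR])
  have cQJ: "cring (R Quot J)" by (rule J.quotient_is_cring[OF cR])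
  define A where "A = RDirProd (R Quot I) (R Quot J)"
  have sr: "split_ring R a = A" by (simp add: split_ring_def A_def I_def J_def)
  have cA: "cring A" unfolding A_def by (rule RDP_cring[OF cQI cQJ])
  define \<phi> where "\<phi> r = (I +> r, J +> r)" for r
  have phihom: "\<phi> \<in> ring_hom R A"
  proof -
    have "\<phi> = (\<lambda>(r, s). (I +> r, J +> s)) \<circ> (\<lambda>a. (a, a))" by (auto simp: \<phi>_def)
    then show ?thesis unfolding A_def
      using ring_hom_trans[OF RDirProd_hom1 RDirProd_hom3[OF I.rcos_ring_hom J.rcos_ring_hom]] by simp
  qed
  interpret hphi: ring_hom_cring R A \<phi> by (rule mk_rhc[OF cR cA phihom])
  interpret hfst: ring_hom_cring A "R Quot I" fst unfolding A_def by (rule mk_rhc[OF RDP_cring[OF cQI cQJ] cQI RDP_fst_hom])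
  interpret hsnd: ring_hom_cring A "R Quot J" snd unfolding A_def by (rule mk_rhc[OF RDP_cring[OF cQI cQJ] cQJ RDP_snd_hom])
  interpret hI: ring_hom_cring R "R Quot I" "(+>) I" by (rule I.rcos_ring_hom_cring[OF cR])
  interpret hJ: ring_hom_cring R "R Quot J" "(+>) J" by (rule J.rcos_ring_hom_cring[OF cR])
  have I0: "I +> \<zero> = I" using I.class_zero_iff I.additive_subgroup_axioms additive_subgroup.zero_closed by blast
  have J0: "J +> \<zero> = J" using J.class_zero_iff J.additive_subgroup_axioms additive_subgroup.zero_closed by blast
  have zA: "\<zero>\<^bsub>A\<^esub> = (I, J)" unfolding A_def by (simp add: I.quot_zero J.quot_zero)
  have carA: "carrier A = carrier (R Quot I) \<times> carrier (R Quot J)" unfolding A_def by simp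
  show ?thesis unfolding sr
  proof (cases "d = -1")
    case True
    have "carrier R = {\<zero>} \<longleftrightarrow> carrier A = {\<zero>\<^bsub>A\<^esub>}"
    proof
      assume R0: "carrier R = {\<zero>}"
      have "carrier (R Quot I) = {I}"
      proof (intro equalityI subsetI)
        fix Y assume "Y \<in> carrier (R Quot I)"
        then obtain r where "r \<in> carrier R" "I +> r = Y" using I.quot_carrier_rep by blast
        then show "Y \<in> {I}" using R0 I0 by auto
      next
        fix Y assume "Y \<in> {I}"
        then show "Y \<in> carrier (R Quot I)" using hI.hom_closed[OF zero_closed] I0 by (metis singletonD)
      qed
      moreover have "carrier (R Quot J) = {J}"
      proof (intro equalityI subsetI)
        fix Y assume "Y \<in> carrier (R Quot J)"
        then obtain r where "r \<in> carrier R" "J +> r = Y" using J.quot_carrier_rep by blast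
        then show "Y \<in> {J}" using R0 J0 by auto
      next
        fix Y assume "Y \<in> {J}"
        then show "Y \<in> carrier (R Quot J)" using hJ.hom_closed[OF zero_closed] J0 by (metis singletonD)
      qed
      ultimately show "carrier A = {\<zero>\<^bsub>A\<^esub>}" using carA zA by simp
    next
      assume A0: "carrier A = {\<zero>\<^bsub>A\<^esub>}"
      show "carrier R = {\<zero>}"
      proof (intro equalityI subsetI)
        fix r assume r: "r \<in> carrier R"
        then have "\<phi> r \<in> carrier A" by simp
        then have "I +> r = I" "J +> r = J" using A0 zA by (auto simp: \<phi>_def)
        then have "r = \<zero>" using inter I.class_zero[OF r] J.class_zero[OF r] by blast
        then show "r \<in> {\<zero>}" by simp
      qed simp
    qed
    then show "dimv_le R d = dimv_le A d" using True unfolding dimv_le_def by simp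
  next
    case False
    define n where "n = nat d"
    have dl: "dimv_le B d \<longleftrightarrow> (\<forall>M. graded_rational_matrix (Suc n) M \<longrightarrow>
             (\<forall>x. (\<forall>j \<le> n. x j \<in> carrier B) \<longrightarrow>
                (\<exists>P. mpoly B n P \<and> mpoly_eval B n P x = \<zero>\<^bsub>B\<^esub> \<and>
                     trailing_coeff_one B n M P)))" for B :: "('c, 'e) ring_scheme"
      unfolding dimv_le_def n_def using False by simp
    show "dimv_le R d = dimv_le A d"
      unfolding dl
    proof (intro iffI allI impI)
      fix M :: "nat \<Rightarrow> nat \<Rightarrow> nat" and x :: "nat \<Rightarrow> 'a set \<times> 'a set"
      assume HR: "\<forall>M. graded_rational_matrix (Suc n) M \<longrightarrow>
             (\<forall>x. (\<forall>j \<le> n. x j \<in> carrier R) \<longrightarrow>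
                (\<exists>P. mpoly R n P \<and> mpoly_eval R n P x = \<zero> \<and> trailing_coeff_one R n M P))"
        and gM: "graded_rational_matrix (Suc n) M" and xA: "\<forall>j\<le>n. x j \<in> carrier A"
      define y where "y j = (SOME r. r \<in> carrier R \<and> I +> r = fst (x j))" for j
      define z where "z j = (SOME r. r \<in> carrier R \<and> J +> r = snd (x j))" for j
      have y: "y j \<in> carrier R \<and> I +> y j = fst (x j)" if "j \<le> n" for j
      proof -
        have "fst (x j) \<in> carrier (R Quot I)" using xA that carA by auto
        then have "\<exists>r. r \<in> carrier R \<and> I +> r = fst (x j)" using I.quot_carrier_rep by blast
        from someI_ex[OF this] show ?thesis unfolding y_def .
      qed
      have z: "z j \<in> carrier R \<and> J +> z j = snd (x j)" if "j \<le> n" for j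
      proof -
        have "snd (x j) \<in> carrier (R Quot J)" using xA that carA by auto
        then have "\<exists>r. r \<in> carrier R \<and> J +> r = snd (x j)" using J.quot_carrier_rep by blast
        from someI_ex[OF this] show ?thesis unfolding z_def .
      qed
      obtain P where P: "mpoly R n P" "mpoly_eval R n P y = \<zero>" "trailing_coeff_one R n M P"
        using HR gM y by blast
      obtain Q where Q: "mpoly R n Q" "mpoly_eval R n Q z = \<zero>" "trailing_coeff_one R n M Q"
        using HR gM z by blast
      obtain W where W: "mpoly R n W" "trailing_coeff_one R n M W"
        "\<And>x. (\<forall>j \<le> n. x j \<in> carrier R) \<Longrightarrow> mpoly_eval R n W x = mpoly_eval R n P x \<otimes> mpoly_eval R n Q x"
        using poly_product[OF P(1) Q(1) P(3) Q(3)] by blast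
      have Wy: "mpoly_eval R n W y = \<zero>" using W(3)[of y] y P(2) eval_closed[OF Q(1), of y] by simp
      have Wz: "mpoly_eval R n W z = \<zero>" using W(3)[of z] z Q(2) eval_closed[OF P(1), of z] by simp
      have mT: "mpoly A n (\<phi> \<circ> W)" by (rule hphi.mpoly_hom[OF W(1)])
      have tT: "trailing_coeff_one A n M (\<phi> \<circ> W)" by (rule hphi.trailing_hom[OF W(2)])
      have ec: "mpoly_eval A n (\<phi> \<circ> W) x \<in> carrier A"
        by (rule cring.eval_closed[OF cA mT]) (use xA in auto)
      have "fst (mpoly_eval A n (\<phi> \<circ> W) x) = mpoly_eval (R Quot I) n (fst \<circ> (\<phi> \<circ> W)) (fst \<circ> x)"
        by (rule hfst.eval_hom[OF mT]) (use xA in auto)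
      also have "fst \<circ> (\<phi> \<circ> W) = (+>) I \<circ> W" by (auto simp: \<phi>_def)
      also have "mpoly_eval (R Quot I) n ((+>) I \<circ> W) (fst \<circ> x) = mpoly_eval (R Quot I) n ((+>) I \<circ> W) ((+>) I \<circ> y)"
        by (rule cring.eval_cong[OF cQI]) (use y in \<open>auto simp del: hI.hom_closed\<close>, metis hI.hom_closed y)
      also have "\<dots> = I +> mpoly_eval R n W y"
        by (rule hI.eval_hom[symmetric, OF W(1)]) (use y in auto)
      finally have f1: "fst (mpoly_eval A n (\<phi> \<circ> W) x) = I +> mpoly_eval R n W y" .
      then have f1: "fst (mpoly_eval A n (\<phi> \<circ> W) x) = I" using Wy I0 by (simp only:)
      have "snd (mpoly_eval A n (\<phi> \<circ> W) x) = mpoly_eval (R Quot J) n (snd \<circ> (\<phi> \<circ> W)) (snd \<circ> x)"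
        by (rule hsnd.eval_hom[OF mT]) (use xA in auto)
      also have "snd \<circ> (\<phi> \<circ> W) = (+>) J \<circ> W" by (auto simp: \<phi>_def)
      also have "mpoly_eval (R Quot J) n ((+>) J \<circ> W) (snd \<circ> x) = mpoly_eval (R Quot J) n ((+>) J \<circ> W) ((+>) J \<circ> z)"
        by (rule cring.eval_cong[OF cQJ]) (use z in \<open>auto simp del: hJ.hom_closed\<close>, metis hJ.hom_closed z)
      also have "\<dots> = J +> mpoly_eval R n W z"
        by (rule hJ.eval_hom[symmetric, OF W(1)]) (use z in auto)
      finally have f2: "snd (mpoly_eval A n (\<phi> \<circ> W) x) = J +> mpoly_eval R n W z" .
      then have f2: "snd (mpoly_eval A n (\<phi> \<circ> W) x) = J" using Wz J0 by (simp only:)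
      have "mpoly_eval A n (\<phi> \<circ> W) x = \<zero>\<^bsub>A\<^esub>" using f1 f2 zA by (simp add: prod_eq_iff)
      then show "\<exists>P. mpoly A n P \<and> mpoly_eval A n P x = \<zero>\<^bsub>A\<^esub> \<and> trailing_coeff_one A n M P"
        using mT tT by blast
    next
      fix M :: "nat \<Rightarrow> nat \<Rightarrow> nat" and x :: "nat \<Rightarrow> 'a"
      assume HA: "\<forall>M. graded_rational_matrix (Suc n) M \<longrightarrow>
             (\<forall>x. (\<forall>j \<le> n. x j \<in> carrier A) \<longrightarrow>
                (\<exists>P. mpoly A n P \<and> mpoly_eval A n P x = \<zero>\<^bsub>A\<^esub> \<and> trailing_coeff_one A n M P))"
        and gM: "graded_rational_matrix (Suc n) M" and xR: "\<forall>j\<le>n. x j \<in> carrier R"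
      have yA: "\<forall>j\<le>n. (\<phi> \<circ> x) j \<in> carrier A" using xR by auto
      obtain T where T: "mpoly A n T" "mpoly_eval A n T (\<phi> \<circ> x) = \<zero>\<^bsub>A\<^esub>" "trailing_coeff_one A n M T"
        using HA gM yA by blast
      obtain P1 where P1: "mpoly R n P1" "trailing_coeff_one R n M P1" "mpoly_eval R n P1 x \<in> I"
        using lift_poly[OF iI cA RDP_fst_hom[of "R Quot I" "R Quot J", folded A_def] T(1) T(3) xR yA _ T(2)]
        by (auto simp: \<phi>_def)
      obtain P2 where P2: "mpoly R n P2" "trailing_coeff_one R n M P2" "mpoly_eval R n P2 x \<in> J"
        using lift_poly[OF iJ cA RDP_snd_hom[of "R Quot I" "R Quot J", folded A_def] T(1) T(3) xR yA _ T(2)]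
        by (auto simp: \<phi>_def)
      obtain W where W: "mpoly R n W" "trailing_coeff_one R n M W"
        "\<And>x. (\<forall>j \<le> n. x j \<in> carrier R) \<Longrightarrow> mpoly_eval R n W x = mpoly_eval R n P1 x \<otimes> mpoly_eval R n P2 x"
        using poly_product[OF P1(1) P2(1) P1(2) P2(2)] by blast
      have c1: "mpoly_eval R n P1 x \<in> carrier R" by (rule eval_closed[OF P1(1)]) (use xR in auto)
      have c2: "mpoly_eval R n P2 x \<in> carrier R" by (rule eval_closed[OF P2(1)]) (use xR in auto)
      have "mpoly_eval R n W x \<in> I" using W(3)[OF xR] I.I_r_closed[OF P1(3) c2] by simp
      moreover have "mpoly_eval R n W x \<in> J" using W(3)[OF xR] J.I_l_closed[OF P2(3) c1] by simp
      ultimately have "mpoly_eval R n W x = \<zero>" using inter by blast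
      then show "\<exists>P. mpoly R n P \<and> mpoly_eval R n P x = \<zero> \<and> trailing_coeff_one R n M P"
        using W(1,2) by blast
    qed
  qed
qed


theorem lemma3p3:
  fixes R :: "('a, 'b) ring_scheme" and a :: 'a and d :: int
  assumes "reduced_ring R" and "a \<in> carrier R" and "d \<ge> -1"
  shows "dimv_le R d \<longleftrightarrow> dimv_le (split_ring R a) d"
  using cring.main[of R a d] assms unfolding reduced_ring_def by blast

end
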